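(* Let $\mathfrak{g}$ be a complex simple Lie algebra with Cartan subalgebra $\mathfrak{h}$, root system $\Delta$, positive roots $\Delta^+$ and simple roots $\Pi$; let $\Sigma\subset\Pi$, $\mathfrak{p}=\mathfrak{l}\oplus\mathfrak{u}$ the associated standard parabolic subalgebra and $\bar{\mathfrak{u}}=\bigoplus_{\alpha\in\Delta(\mathfrak{u})}\mathfrak{g}_{-\alpha}$ its opposite nilradical, $\Delta(\mathfrak{u})=\Delta^+\setminus\Delta^+_\Sigma$. Let $\{f_\alpha;\alpha\in\Delta(\mathfrak{u})\}$ be a basis of $\bar{\mathfrak{u}}$, and let $x_{\alpha,n}$ ($\alpha\in\Delta(\mathfrak{u}),n\in\mathbb{Z}$) be commuting variables which commute with $\widehat{\mathfrak{g}}$. Put $u(x)=\sum_{\alpha\in\Delta(\mathfrak{u})}\sum_{n\in\mathbb{Z}}x_{\alpha,n}f_{\alpha,n}$ where $f_{\alpha,n}=f_\alpha\otimes t^n$, $a^*_\alpha(z)=\sum_{n\in\mathbb{Z}}x_{\alpha,-n}z^{-n}$ and $u(z)=\sum_{\alpha\in\Delta(\mathfrak{u})}a^*_\alpha(z)f_\alpha$. Then for all $a\in\mathfrak{g}$ and $k\in\mathbb{N}$, $$(\operatorname{ad}(u(x)))^k(a(z))=(\operatorname{ad}(u(z)))^k(a(z))+(-1)^{k-1}\big((\operatorname{ad}(u(z)))^{k-1}(\partial_z u(z)),a\big)c.$$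
   Context: $(\cdot,\cdot)$ is the $\mathfrak{g}$-invariant symmetric bilinear form on $\mathfrak{g}$ normalized by $(\theta,\theta)=2$ for the maximal root $\theta$. The affine Kac-Moody algebra is $\widehat{\mathfrak{g}}=\mathfrak{g}\otimes\mathbb{C}((t))\oplus\mathbb{C}c$ with $c$ central and $[a_m,b_n]=[a,b]_{m+n}+m(a,b)\delta_{m,-n}c$, where $a_n=a\otimes t^n$. For $a\in\mathfrak{g}$, $a(z)=\sum_{n\in\mathbb{Z}}a_nz^{-n-1}$. The left side is computed in $\widehat{\mathfrak{g}}$ with coefficients polynomial in the $x$'s. On the right, $\mathfrak{g}\otimes P(z)$ (with $P(z)$ the polynomial algebra in the $a^*_\alpha(z)$) is a Lie algebra over $P(z)$, and an element $\sum_r P_r(z)b_r$ ($b_r\in\mathfrak{g}$, $P_r(z)\in P(z)$) is identified with $\sum_rP_r(z)b_r(z)$; in particular $(\operatorname{ad}u(z))^k(a(z))$ means $(\operatorname{ad}u(z))^k(a)$ with each $b\in\mathfrak{g}$ replaced by $b(z)$. The form $(\cdot,\cdot)$ is extended $P(z)$-bilinearly, and $\partial_zu(z)=\sum_\alpha\partial_za^*_\alpha(z)f_\alpha$. *)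

theory Defs
  imports "HOL-Analysis.Analysis" "HOL-Library.Multiset"
begin

text \<open>The Lie algebra g is modelled as the complex vector space complex^'n
 (any finite dimension) with a bracket br.  Linear functionals on h
 (elements of h-dual) are functions g => complex that are linear on h and
 vanish outside h.\<close>

type_synonym 'n g = "complex ^ 'n"
type_synonym 'n hd = "'n g \<Rightarrow> complex"

definition lie_algebra :: "(('n::finite) g \<Rightarrow> ('n::finite) g \<Rightarrow> ('n::finite) g) \<Rightarrow> bool" where
  "lie_algebra br \<longleftrightarrow>
     (\<forall>x y z. br (x + y) z = br x z + br y z) \<and>
     (\<forall>x y z. br x (y + z) = br x y + br x z) \<and>
     (\<forall>c x y. br (c *s x) y = c *s br x y) \<and>
     (\<forall>c x y. br x (c *s y) = c *s br x y) \<and>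
     (\<forall>x. br x x = 0) \<and>
     (\<forall>x y z. br x (br y z) + br y (br z x) + br z (br x y) = 0)"

definition lie_ideal :: "(('n::finite) g \<Rightarrow> ('n::finite) g \<Rightarrow> ('n::finite) g) \<Rightarrow> ('n::finite) g set \<Rightarrow> bool" where
  "lie_ideal br I \<longleftrightarrow> vec.subspace I \<and> (\<forall>x\<in>I. \<forall>y. br y x \<in> I)"

definition simple_lie :: "(('n::finite) g \<Rightarrow> ('n::finite) g \<Rightarrow> ('n::finite) g) \<Rightarrow> bool" where
  "simple_lie br \<longleftrightarrow> lie_algebra br \<and> (\<exists>x y. br x y \<noteq> 0) \<and>
     (\<forall>I. lie_ideal br I \<longrightarrow> I = {0} \<or> I = UNIV)"

definition lie_subalgebra :: "(('n::finite) g \<Rightarrow> ('n::finite) g \<Rightarrow> ('n::finite) g) \<Rightarrow> ('n::finite) g set \<Rightarrow> bool" where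
  "lie_subalgebra br h \<longleftrightarrow> vec.subspace h \<and> (\<forall>x\<in>h. \<forall>y\<in>h. br x y \<in> h)"

definition lie_nilpotent :: "(('n::finite) g \<Rightarrow> ('n::finite) g \<Rightarrow> ('n::finite) g) \<Rightarrow> ('n::finite) g set \<Rightarrow> bool" where
  "lie_nilpotent br h \<longleftrightarrow>
     (\<exists>m. \<forall>xs y. set xs \<subseteq> h \<longrightarrow> length xs = m \<longrightarrow> y \<in> h \<longrightarrow> foldr br xs y = 0)"

definition cartan_subalgebra :: "(('n::finite) g \<Rightarrow> ('n::finite) g \<Rightarrow> ('n::finite) g) \<Rightarrow> ('n::finite) g set \<Rightarrow> bool" where
  "cartan_subalgebra br h \<longleftrightarrow> lie_subalgebra br h \<and> lie_nilpotent br h \<and>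
     (\<forall>x. (\<forall>y\<in>h. br x y \<in> h) \<longrightarrow> x \<in> h)"

definition hdual :: "('n::finite) g set \<Rightarrow> ('n::finite) hd \<Rightarrow> bool" where
  "hdual h \<alpha> \<longleftrightarrow> (\<forall>x\<in>h. \<forall>y\<in>h. \<alpha> (x + y) = \<alpha> x + \<alpha> y) \<and>
     (\<forall>c. \<forall>x\<in>h. \<alpha> (c *s x) = c * \<alpha> x) \<and> (\<forall>x. x \<notin> h \<longrightarrow> \<alpha> x = 0)"

definition rootspace :: "(('n::finite) g \<Rightarrow> ('n::finite) g \<Rightarrow> ('n::finite) g) \<Rightarrow> ('n::finite) g set \<Rightarrow> ('n::finite) hd \<Rightarrow> ('n::finite) g set" where
  "rootspace br h \<alpha> = {x. \<forall>H\<in>h. br H x = \<alpha> H *s x}"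

definition roots :: "(('n::finite) g \<Rightarrow> ('n::finite) g \<Rightarrow> ('n::finite) g) \<Rightarrow> ('n::finite) g set \<Rightarrow> ('n::finite) hd set" where
  "roots br h = {\<alpha>. hdual h \<alpha> \<and> \<alpha> \<noteq> (\<lambda>_. 0) \<and> rootspace br h \<alpha> \<noteq> {0}}"

definition nn_comb :: "('n::finite) hd set \<Rightarrow> ('n::finite) hd \<Rightarrow> bool" where
  "nn_comb S \<beta> \<longleftrightarrow> (\<exists>c :: ('n::finite) hd \<Rightarrow> nat. \<beta> = (\<lambda>x. \<Sum>\<alpha>\<in>S. of_nat (c \<alpha>) * \<alpha> x))"

definition is_base :: "(('n::finite) g \<Rightarrow> ('n::finite) g \<Rightarrow> ('n::finite) g) \<Rightarrow> ('n::finite) g set \<Rightarrow> ('n::finite) hd set \<Rightarrow> bool" where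
  "is_base br h P \<longleftrightarrow> finite P \<and> P \<subseteq> roots br h \<and>
     (\<forall>c :: ('n::finite) hd \<Rightarrow> complex. (\<lambda>x. \<Sum>\<alpha>\<in>P. c \<alpha> * \<alpha> x) = (\<lambda>_. 0) \<longrightarrow> (\<forall>\<alpha>\<in>P. c \<alpha> = 0)) \<and>
     (\<forall>\<beta>\<in>roots br h. nn_comb P \<beta> \<or> nn_comb P (\<lambda>x. - \<beta> x))"

definition pos_roots :: "(('n::finite) g \<Rightarrow> ('n::finite) g \<Rightarrow> ('n::finite) g) \<Rightarrow> ('n::finite) g set \<Rightarrow> ('n::finite) hd set \<Rightarrow> ('n::finite) hd set" where
  "pos_roots br h P = {\<beta>\<in>roots br h. nn_comb P \<beta>}"

definition highest_root :: "(('n::finite) g \<Rightarrow> ('n::finite) g \<Rightarrow> ('n::finite) g) \<Rightarrow> ('n::finite) g set \<Rightarrow> ('n::finite) hd set \<Rightarrow> ('n::finite) hd \<Rightarrow> bool" where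
  "highest_root br h P \<theta> \<longleftrightarrow> \<theta> \<in> roots br h \<and> (\<forall>\<beta>\<in>roots br h. nn_comb P (\<lambda>x. \<theta> x - \<beta> x))"

definition invariant_form :: "(('n::finite) g \<Rightarrow> ('n::finite) g \<Rightarrow> ('n::finite) g) \<Rightarrow> (('n::finite) g \<Rightarrow> ('n::finite) g \<Rightarrow> complex) \<Rightarrow> bool" where
  "invariant_form br B \<longleftrightarrow>
     (\<forall>x y z. B (x + y) z = B x z + B y z) \<and> (\<forall>c x y. B (c *s x) y = c * B x y) \<and>
     (\<forall>x y. B x y = B y x) \<and> (\<forall>x y z. B (br x y) z = B x (br y z))"

text \<open>(theta,theta) = 2 for the form induced on h-dual.\<close>
definition normalized_form :: "(('n::finite) g \<Rightarrow> ('n::finite) g \<Rightarrow> ('n::finite) g) \<Rightarrow> ('n::finite) g set \<Rightarrow> ('n::finite) hd set \<Rightarrow> (('n::finite) g \<Rightarrow> ('n::finite) g \<Rightarrow> complex) \<Rightarrow> bool" where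
  "normalized_form br h P B \<longleftrightarrow> (\<exists>\<theta>. highest_root br h P \<theta> \<and>
     (\<exists>t\<in>h. (\<forall>H\<in>h. B t H = \<theta> H) \<and> B t t = 2))"

definition Delta_u :: "(('n::finite) g \<Rightarrow> ('n::finite) g \<Rightarrow> ('n::finite) g) \<Rightarrow> ('n::finite) g set \<Rightarrow> ('n::finite) hd set \<Rightarrow> ('n::finite) hd set \<Rightarrow> ('n::finite) hd set" where
  "Delta_u br h P S = pos_roots br h P - {\<beta>\<in>pos_roots br h P. nn_comb S \<beta>}"

definition ubar :: "(('n::finite) g \<Rightarrow> ('n::finite) g \<Rightarrow> ('n::finite) g) \<Rightarrow> ('n::finite) g set \<Rightarrow> ('n::finite) hd set \<Rightarrow> ('n::finite) hd set \<Rightarrow> ('n::finite) g set" where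
  "ubar br h P S = vec.span (\<Union>\<alpha>\<in>Delta_u br h P S. rootspace br h (\<lambda>x. - \<alpha> x))"

text \<open>Monomials in the variables x_(alpha,n) are multisets of pairs (alpha,n).\<close>
type_synonym 'n mono = "('n hd \<times> int) multiset"

text \<open>Completed space for the left side: an element is given by the coefficient
 (in g) of  M * z^j * (b tensor t^p)  and the coefficient (in C) of  M * z^j * c.\<close>
type_synonym 'n W = "('n mono \<Rightarrow> int \<Rightarrow> int \<Rightarrow> 'n g) \<times> ('n mono \<Rightarrow> int \<Rightarrow> complex)"

definition addW :: "('n::finite) W \<Rightarrow> ('n::finite) W \<Rightarrow> ('n::finite) W" where
  "addW v w = ((\<lambda>M j p. fst v M j p + fst w M j p), (\<lambda>M j. snd v M j + snd w M j))"

text \<open>a(z) = sum_m a_m z^(-m-1).\<close>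
definition currentW :: "('n::finite) g \<Rightarrow> ('n::finite) W" where
  "currentW a = ((\<lambda>M j p. if M = {#} \<and> j = - p - 1 then a else 0), (\<lambda>M j. 0))"

text \<open>ad(u(x)) with u(x) = sum x_(alpha,n) f_(alpha,n), using
 [b_m, b'_n] = [b,b']_(m+n) + m (b,b') delta_(m,-n) c.\<close>
definition adUx :: "(('n::finite) g \<Rightarrow> ('n::finite) g \<Rightarrow> ('n::finite) g) \<Rightarrow> (('n::finite) g \<Rightarrow> ('n::finite) g \<Rightarrow> complex) \<Rightarrow> ('n::finite) hd set
                    \<Rightarrow> (('n::finite) hd \<Rightarrow> ('n::finite) g) \<Rightarrow> ('n::finite) W \<Rightarrow> ('n::finite) W" where
  "adUx br B D f w =
    ((\<lambda>M j p. \<Sum>q\<in>{q\<in>set_mset M. fst q \<in> D}. br (f (fst q)) (fst w (M - {#q#}) j (p - snd q))),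
     (\<lambda>M j. \<Sum>q\<in>{q\<in>set_mset M. fst q \<in> D}. of_int (snd q) * B (f (fst q)) (fst w (M - {#q#}) j (- snd q))))"

text \<open>g-valued formal series in the x's and z: coefficient of M * z^j.
 This contains g tensor P(z), where a*_alpha(z) = sum_m x_(alpha,m) z^m.\<close>
type_synonym 'n GS = "'n mono \<Rightarrow> int \<Rightarrow> 'n g"

text \<open>Bracket of g-valued series, bilinear over the scalar series
 (all series occurring have, for each monomial, finitely many z-powers).\<close>
definition brS :: "(('n::finite) g \<Rightarrow> ('n::finite) g \<Rightarrow> ('n::finite) g) \<Rightarrow> ('n::finite) GS \<Rightarrow> ('n::finite) GS \<Rightarrow> ('n::finite) GS" where
  "brS br U V = (\<lambda>M j. \<Sum>M1\<in>{M1. M1 \<subseteq># M}. \<Sum>j1\<in>{j1. U M1 j1 \<noteq> 0}.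
                         br (U M1 j1) (V (M - M1) (j - j1)))"

definition uz :: "('n::finite) hd set \<Rightarrow> (('n::finite) hd \<Rightarrow> ('n::finite) g) \<Rightarrow> ('n::finite) GS" where
  "uz D f = (\<lambda>M j. \<Sum>q\<in>{q. M = {#q#} \<and> fst q \<in> D \<and> snd q = j}. f (fst q))"

definition constS :: "('n::finite) g \<Rightarrow> ('n::finite) GS" where
  "constS a = (\<lambda>M j. if M = {#} \<and> j = 0 then a else 0)"

definition dzS :: "('n::finite) GS \<Rightarrow> ('n::finite) GS" where
  "dzS U = (\<lambda>M j. of_int (j + 1) *s U M (j + 1))"

text \<open>Replace each b in g by b(z) = sum_p b_p z^(-p-1).\<close>
definition realizeW :: "('n::finite) GS \<Rightarrow> ('n::finite) W" where
  "realizeW V = ((\<lambda>M j p. V M (j + p + 1)), (\<lambda>M j. 0))"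

definition centralW :: "(('n::finite) mono \<Rightarrow> int \<Rightarrow> complex) \<Rightarrow> ('n::finite) W" where
  "centralW s = ((\<lambda>M j p. 0), s)"

definition formS :: "(('n::finite) g \<Rightarrow> ('n::finite) g \<Rightarrow> complex) \<Rightarrow> ('n::finite) GS \<Rightarrow> ('n::finite) g \<Rightarrow> (('n::finite) mono \<Rightarrow> int \<Rightarrow> complex)" where
  "formS B U a = (\<lambda>M j. B (U M j) a)"

end

theory Submission imports Defs begin

lemma lie_facts: assumes "lie_algebra br"
  shows "br (x + y) z = br x z + br y z" "br x (y + z) = br x y + br x z" "br x x = 0"
proof -
  note h = assms[unfolded lie_algebra_def]
  have h1: "\<forall>x y z. br (x + y) z = br x z + br y z" using h by (elim conjE) assumption
  have h2: "\<forall>x y z. br x (y + z) = br x y + br x z" using h by (elim conjE) assumption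
  have h3: "\<forall>x. br x x = 0" using h by (elim conjE) assumption
  show "br (x + y) z = br x z + br y z" by (rule h1[rule_format])
  show "br x (y + z) = br x y + br x z" by (rule h2[rule_format])
  show "br x x = 0" by (rule h3[rule_format])
qed

lemma br_zero_left: assumes "lie_algebra br" shows "br 0 y = 0"
proof -
  have "br (0+0) y = br 0 y + br 0 y" by (rule lie_facts(1)[OF assms])
  then show ?thesis by simp
qed

lemma br_zero_right: assumes "lie_algebra br" shows "br x 0 = 0"
proof -
  have "br x (0+0) = br x 0 + br x 0" by (rule lie_facts(2)[OF assms])
  then show ?thesis by simp
qed

lemma br_sum_right: assumes "lie_algebra br" shows "br x (sum g A) = (\<Sum>i\<in>A. br x (g i))"
proof (induction A rule: infinite_finite_induct)
  case (infinite A) then show ?case using br_zero_right[OF assms] by simp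
next
  case empty then show ?case using br_zero_right[OF assms] by simp
next
  case (insert y F)
  have "br x (g y + sum g F) = br x (g y) + br x (sum g F)" by (rule lie_facts(2)[OF assms])
  then show ?case using insert by simp
qed

lemma br_antisym: assumes "lie_algebra br" shows "br x y = - br y x"
proof -
  have a1: "br (x+y) (x+y) = br x (x+y) + br y (x+y)" by (rule lie_facts(1)[OF assms])
  have a2: "br x (x+y) = br x x + br x y" by (rule lie_facts(2)[OF assms])
  have a3: "br y (x+y) = br y x + br y y" by (rule lie_facts(2)[OF assms])
  have "br x y + br y x = 0" using a1 a2 a3 lie_facts(3)[OF assms, of x] lie_facts(3)[OF assms, of y]
     lie_facts(3)[OF assms, of "x+y"] by simp
  then show ?thesis by (simp add: eq_neg_iff_add_eq_0)
qed

lemma B_facts: assumes "invariant_form br B"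
  shows "B (x + y) z = B x z + B y z" "B x y = B y x" "B (c *s x) y = c * B x y" "B (br x y) z = B x (br y z)"
proof -
  note h = assms[unfolded invariant_form_def]
  have h1: "\<forall>x y z. B (x + y) z = B x z + B y z" using h by (elim conjE) assumption
  have h2: "\<forall>x y. B x y = B y x" using h by (elim conjE) assumption
  have h3: "\<forall>c x y. B (c *s x) y = c * B x y" using h by (elim conjE) assumption
  have h4: "\<forall>x y z. B (br x y) z = B x (br y z)" using h by (elim conjE) assumption
  show "B (x + y) z = B x z + B y z" by (rule h1[rule_format])
  show "B x y = B y x" by (rule h2[rule_format])
  show "B (c *s x) y = c * B x y" by (rule h3[rule_format])
  show "B (br x y) z = B x (br y z)" by (rule h4[rule_format])
qed

lemma B_neg: assumes "invariant_form br B" shows "B (- x) y = - B x y"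
proof -
  have "B (- x) y = B ((-1) *s x) y" by (simp only: vector_sneg_minus1[of x])
  also have "\<dots> = (-1) * B x y" by (rule B_facts(3)[OF assms])
  finally show ?thesis by simp
qed

lemma B_zero_right: assumes "invariant_form br B" shows "B x 0 = 0"
proof -
  have "B (0+0) x = B 0 x + B 0 x" by (rule B_facts(1)[OF assms])
  then have "B 0 x = 0" by simp
  then show ?thesis by (simp only: B_facts(2)[OF assms, of x 0])
qed

lemma B_sum_right: assumes "invariant_form br B" shows "B x (sum g A) = (\<Sum>i\<in>A. B x (g i))"
proof (induction A rule: infinite_finite_induct)
  case (infinite A) then show ?case using B_zero_right[OF assms] by simp
next
  case empty then show ?case using B_zero_right[OF assms] by simp
next
  case (insert y F)
  have "B x (g y + sum g F) = B (g y + sum g F) x" by (rule B_facts(2)[OF assms])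
  also have "\<dots> = B (g y) x + B (sum g F) x" by (rule B_facts(1)[OF assms])
  also have "\<dots> = B x (g y) + B x (sum g F)"
    by (simp only: B_facts(2)[OF assms, of "g y" x] B_facts(2)[OF assms, of "sum g F" x])
  finally show ?case using insert by simp
qed

lemma B_scale_right: assumes "invariant_form br B" shows "B x (c *s y) = c * B x y"
  by (simp only: B_facts(2)[OF assms, of x "c *s y"] B_facts(3)[OF assms, of c y x] B_facts(2)[OF assms, of y x])


lemma B_sum_left: assumes "invariant_form br B" shows "B (sum g A) y = (\<Sum>i\<in>A. B (g i) y)"
proof -
  have "B (sum g A) y = B y (sum g A)" by (rule B_facts(2)[OF assms])
  also have "\<dots> = (\<Sum>i\<in>A. B y (g i))" by (rule B_sum_right[OF assms])
  also have "\<dots> = (\<Sum>i\<in>A. B (g i) y)" by (rule sum.cong[OF refl], rule B_facts(2)[OF assms])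
  finally show ?thesis .
qed

lemma fin_sub: "finite {M1. M1 \<subseteq># M}"
proof -
  have "{M1. M1 \<subseteq># M} \<subseteq> mset ` {xs. set xs \<subseteq> set_mset M \<and> length xs \<le> size M}"
  proof
    fix M1 assume "M1 \<in> {M1. M1 \<subseteq># M}"
    then have s: "M1 \<subseteq># M" by simp
    obtain xs where xs: "mset xs = M1" using ex_mset by blast
    have "set xs = set_mset M1" unfolding xs[symmetric] by (rule set_mset_mset[symmetric])
    then have "set xs \<subseteq> set_mset M" using set_mset_mono[OF s] by simp
    moreover have "length xs = size M1" unfolding xs[symmetric] by (rule size_mset[symmetric])
    then have "length xs \<le> size M" using size_mset_mono[OF s] by simp
    ultimately show "M1 \<in> mset ` {xs. set xs \<subseteq> set_mset M \<and> length xs \<le> size M}" using xs by blast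
  qed
  moreover have "finite (mset ` {xs. set xs \<subseteq> set_mset M \<and> length xs \<le> size M})"
    by (rule finite_imageI, rule finite_lists_length_le, simp)
  ultimately show ?thesis by (rule finite_subset)
qed

lemma uz_single: "fst q \<in> D \<Longrightarrow> uz D f {#q#} j1 = (if j1 = snd q then f (fst q) else 0)"
proof -
  assume q: "fst q \<in> D"
  have e: "{q'. {#q#} = {#q'#} \<and> fst q' \<in> D \<and> snd q' = j1} = (if j1 = snd q then {q} else {})"
    using q by auto
  show ?thesis unfolding uz_def e by (cases "j1 = snd q") simp_all
qed

lemma uz_other: "\<not> (\<exists>q. M1 = {#q#} \<and> fst q \<in> D) \<Longrightarrow> uz D f M1 j1 = 0"
proof -
  assume h: "\<not> (\<exists>q. M1 = {#q#} \<and> fst q \<in> D)"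
  have e: "{q. M1 = {#q#} \<and> fst q \<in> D \<and> snd q = j1} = {}" using h by auto
  show ?thesis unfolding uz_def e sum.empty ..
qed

lemma T_eq:
  assumes la: "lie_algebra br"
  shows "brS br (uz D f) V M j =
     (\<Sum>q\<in>{q\<in>set_mset M. fst q \<in> D}. br (f (fst q)) (V (M - {#q#}) (j - snd q)))"
proof -
  define g where "g M1 = (\<Sum>j1\<in>{j1. uz D f M1 j1 \<noteq> 0}. br (uz D f M1 j1) (V (M - M1) (j - j1)))" for M1
  define Q where "Q = {q\<in>set_mset M. fst q \<in> D}"
  have g1: "g {#q#} = br (f (fst q)) (V (M - {#q#}) (j - snd q))" if "fst q \<in> D" for q
  proof (cases "f (fst q) = 0")
    case True
    have "{j1. uz D f {#q#} j1 \<noteq> 0} = {}" using uz_single[OF that] True by auto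
    then show ?thesis unfolding g_def using True br_zero_left[OF la] by simp
  next
    case False
    have "{j1. uz D f {#q#} j1 \<noteq> 0} = {snd q}" using uz_single[OF that] False by auto
    then show ?thesis unfolding g_def using uz_single[OF that] by simp
  qed
  have g0: "g M1 = 0" if "\<not> (\<exists>q. M1 = {#q#} \<and> fst q \<in> D)" for M1
  proof -
    have "{j1. uz D f M1 j1 \<noteq> 0} = {}" using uz_other[OF that] by auto
    then show ?thesis unfolding g_def by simp
  qed
  have "brS br (uz D f) V M j = sum g {M1. M1 \<subseteq># M}" unfolding brS_def g_def by simp
  also have "\<dots> = sum g ((\<lambda>q. {#q#}) ` Q)"
  proof (rule sum.mono_neutral_right[OF fin_sub])
    show "(\<lambda>q. {#q#}) ` Q \<subseteq> {M1. M1 \<subseteq># M}" unfolding Q_def by auto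
    show "\<forall>i\<in>{M1. M1 \<subseteq># M} - (\<lambda>q. {#q#}) ` Q. g i = 0"
    proof
      fix i assume "i \<in> {M1. M1 \<subseteq># M} - (\<lambda>q. {#q#}) ` Q"
      then have "i \<subseteq># M" "i \<notin> (\<lambda>q. {#q#}) ` Q" by auto
      then have "\<not> (\<exists>q. i = {#q#} \<and> fst q \<in> D)" unfolding Q_def by auto
      then show "g i = 0" by (rule g0)
    qed
  qed
  also have "\<dots> = sum (\<lambda>q. g {#q#}) Q" using sum.reindex[of "\<lambda>q. {#q#}" Q g] by (simp add: inj_on_def comp_def)
  also have "\<dots> = (\<Sum>q\<in>Q. br (f (fst q)) (V (M - {#q#}) (j - snd q)))"
    by (rule sum.cong) (auto simp: Q_def g1)
  finally show ?thesis unfolding Q_def .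
qed

definition Cf :: "(('n::finite) g \<Rightarrow> ('n::finite) g \<Rightarrow> complex) \<Rightarrow> ('n::finite) hd set \<Rightarrow> (('n::finite) hd \<Rightarrow> ('n::finite) g) \<Rightarrow> ('n::finite) GS \<Rightarrow> (('n::finite) mono \<Rightarrow> int \<Rightarrow> complex)" where
  "Cf B D f V = (\<lambda>M j. \<Sum>q\<in>{q\<in>set_mset M. fst q \<in> D}. of_int (snd q) * B (f (fst q)) (V (M - {#q#}) (j - snd q + 1)))"

lemma adUx_step:
  assumes la: "lie_algebra br" and w: "fst w = fst (realizeW V)"
  shows "adUx br B D f w = addW (realizeW (brS br (uz D f) V)) (centralW (Cf B D f V))"
proof -
  have w': "fst w = (\<lambda>M j p. V M (j+p+1))" using w by (simp add: realizeW_def)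
  have e1: "j + (p - s) + 1 = j + p + 1 - s" for j p s :: int by simp
  have e2: "j + - s + 1 = j - s + 1" for j s :: int by simp
  show ?thesis
  proof (rule prod_eqI)
    show "fst (adUx br B D f w) = fst (addW (realizeW (brS br (uz D f) V)) (centralW (Cf B D f V)))"
      unfolding adUx_def addW_def realizeW_def centralW_def T_eq[OF la] w'
      apply (simp only: fst_conv add_0_right)
      apply (intro ext sum.cong refl)
      apply (simp only: e1)
      done
    show "snd (adUx br B D f w) = snd (addW (realizeW (brS br (uz D f) V)) (centralW (Cf B D f V)))"
      unfolding adUx_def addW_def realizeW_def centralW_def Cf_def w'
      apply (simp only: snd_conv add_0_left)
      apply (intro ext sum.cong refl)
      apply (simp only: e2)
      done
  qed
qed

lemma currentW_real: "fst (currentW a) = fst (realizeW (constS a))"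
  unfolding currentW_def realizeW_def constS_def by (auto intro!: ext)

lemma iter:
  assumes la: "lie_algebra br" and k: "k \<ge> 1"
  shows "(adUx br B D f ^^ k) (currentW a) =
     addW (realizeW ((brS br (uz D f) ^^ k) (constS a))) (centralW (Cf B D f ((brS br (uz D f) ^^ (k-1)) (constS a))))"
  using k
proof (induction k)
  case 0 then show ?case by simp
next
  case (Suc k)
  show ?case
  proof (cases "k = 0")
    case True
    have "(adUx br B D f ^^ Suc k) (currentW a) = adUx br B D f (currentW a)" using True by simp
    also have "\<dots> = addW (realizeW (brS br (uz D f) (constS a))) (centralW (Cf B D f (constS a)))"
      by (rule adUx_step[OF la currentW_real])
    finally show ?thesis using True by simp
  next
    case False
    then have IH: "(adUx br B D f ^^ k) (currentW a) =
     addW (realizeW ((brS br (uz D f) ^^ k) (constS a))) (centralW (Cf B D f ((brS br (uz D f) ^^ (k-1)) (constS a))))"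
      using Suc by simp
    have "fst ((adUx br B D f ^^ k) (currentW a)) = fst (realizeW ((brS br (uz D f) ^^ k) (constS a)))"
      unfolding IH by (simp add: addW_def realizeW_def centralW_def)
    have "(adUx br B D f ^^ Suc k) (currentW a) = adUx br B D f ((adUx br B D f ^^ k) (currentW a))" by simp
    also have "\<dots> = addW (realizeW (brS br (uz D f) ((brS br (uz D f) ^^ k) (constS a)))) (centralW (Cf B D f ((brS br (uz D f) ^^ k) (constS a))))"
      by (rule adUx_step[OF la \<open>fst ((adUx br B D f ^^ k) (currentW a)) = fst (realizeW ((brS br (uz D f) ^^ k) (constS a)))\<close>])
    finally show ?thesis by simp
  qed
qed


lemma ma: "X \<subseteq># M \<Longrightarrow> M - X = {#q#} \<Longrightarrow> X = M - {#q#}"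
  by (simp add: subset_mset.le_imp_diff_is_add)
lemma mb: "q \<in># M \<Longrightarrow> X = M - {#q#} \<Longrightarrow> M - X = {#q#}"
  by (metis add_diff_cancel_left' insert_DiffM2)
lemma mc: "X \<subseteq># N \<Longrightarrow> (N - X = {#}) = (X = N)"
  by (metis Diff_eq_empty_iff_mset subset_mset.dual_order.antisym)
lemma md: "M - {#q#} - N = M - add_mset q N" by simp

lemma br_scale_right: assumes "lie_algebra br" shows "br x (c *s y) = c *s br x y"
proof -
  have "\<forall>c x y. br x (c *s y) = c *s br x y" using assms[unfolded lie_algebra_def] by (elim conjE) assumption
  then show ?thesis by (rule allE[of _ c], elim allE)
qed

definition ev :: "(('n::finite) g \<Rightarrow> ('n::finite) g \<Rightarrow> ('n::finite) g) \<Rightarrow> (('n::finite) hd \<Rightarrow> ('n::finite) g) \<Rightarrow> (('n::finite) hd \<times> int) list \<Rightarrow> ('n::finite) g \<Rightarrow> ('n::finite) g" where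
  "ev br f xs a = foldr (\<lambda>q acc. br (f (fst q)) acc) xs a"

definition Lm :: "('n::finite) hd set \<Rightarrow> ('n::finite) mono \<Rightarrow> nat \<Rightarrow> (('n::finite) hd \<times> int) list set" where
  "Lm D M m = {xs. mset xs \<subseteq># M \<and> length xs = m \<and> (\<forall>q\<in>set xs. fst q \<in> D)}"

lemma ev_Nil: "ev br f [] a = a" by (simp add: ev_def)
lemma ev_Cons: "ev br f (q#xs) a = br (f (fst q)) (ev br f xs a)" by (simp add: ev_def)
lemma ev_append: "ev br f (xs @ ys) a = ev br f xs (ev br f ys a)" by (simp add: ev_def)

lemma ev_zero: assumes "lie_algebra br" shows "ev br f xs 0 = 0"
  by (induction xs) (simp_all add: ev_Nil ev_Cons br_zero_right[OF assms])

lemma ev_scale: assumes "lie_algebra br" shows "ev br f xs (c *s y) = c *s ev br f xs y"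
  by (induction xs) (simp_all add: ev_Nil ev_Cons br_scale_right[OF assms])

lemma fin_Lm: "finite (Lm D M m)"
proof -
  have "Lm D M m \<subseteq> {xs. set xs \<subseteq> set_mset M \<and> length xs = m}"
  proof
    fix xs assume "xs \<in> Lm D M m"
    then have s: "mset xs \<subseteq># M" "length xs = m" unfolding Lm_def by auto
    have "set xs = set_mset (mset xs)" by simp
    then have "set xs \<subseteq> set_mset M" using set_mset_mono[OF s(1)] by simp
    then show "xs \<in> {xs. set xs \<subseteq> set_mset M \<and> length xs = m}" using s by simp
  qed
  moreover have "finite {xs. set xs \<subseteq> set_mset M \<and> length xs = m}"
    by (rule finite_lists_length_eq) simp
  ultimately show ?thesis by (rule finite_subset)
qed

lemma Lm_0: "Lm D M 0 = {[]}" unfolding Lm_def by auto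

lemma Lm_Cons: "(q#ys \<in> Lm D M (Suc m)) = (q \<in># M \<and> fst q \<in> D \<and> ys \<in> Lm D (M - {#q#}) m)"
  unfolding Lm_def by (auto simp: insert_subset_eq_iff)

lemma Tpow:
  assumes la: "lie_algebra br"
  shows "(brS br (uz D f) ^^ m) V M j =
    (\<Sum>xs\<in>Lm D M m. ev br f xs (V (M - mset xs) (j - sum_list (map snd xs))))"
proof (induction m arbitrary: M j)
  case 0
  show ?case by (simp add: Lm_0 ev_Nil)
next
  case (Suc m)
  define Q where "Q = {q\<in>set_mset M. fst q \<in> D}"
  define G where "G xs = ev br f xs (V (M - mset xs) (j - sum_list (map snd xs)))" for xs
  have "(brS br (uz D f) ^^ Suc m) V M j = brS br (uz D f) ((brS br (uz D f) ^^ m) V) M j" by simp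
  also have "\<dots> = (\<Sum>q\<in>Q. br (f (fst q)) ((brS br (uz D f) ^^ m) V (M - {#q#}) (j - snd q)))"
    unfolding Q_def by (rule T_eq[OF la])
  also have "\<dots> = (\<Sum>q\<in>Q. \<Sum>ys\<in>Lm D (M - {#q#}) m. G (q#ys))"
  proof (rule sum.cong[OF refl])
    fix q
    show "br (f (fst q)) ((brS br (uz D f) ^^ m) V (M - {#q#}) (j - snd q)) = (\<Sum>ys\<in>Lm D (M - {#q#}) m. G (q#ys))"
      unfolding Suc.IH br_sum_right[OF la] G_def ev_Cons
      by (rule sum.cong[OF refl]) (simp add: md algebra_simps)
  qed
  also have "\<dots> = (\<Sum>p\<in>Sigma Q (\<lambda>q. Lm D (M - {#q#}) m). G (fst p # snd p))"
    by (subst sum.Sigma) (auto simp: Q_def fin_Lm split_def)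
  also have "\<dots> = (\<Sum>xs\<in>Lm D M (Suc m). G xs)"
  proof (rule sum.reindex_bij_witness[where i="\<lambda>xs. (hd xs, tl xs)" and j="\<lambda>p. fst p # snd p"])
    fix p assume "p \<in> Sigma Q (\<lambda>q. Lm D (M - {#q#}) m)"
    then show "(hd (fst p # snd p), tl (fst p # snd p)) = p" by simp
    show "fst p # snd p \<in> Lm D M (Suc m)" using \<open>p \<in> _\<close> by (cases p) (auto simp: Lm_Cons Q_def)
    show "G (fst p # snd p) = G (fst p # snd p)" ..
  next
    fix xs assume xs: "xs \<in> Lm D M (Suc m)"
    then obtain q ys where e: "xs = q#ys" unfolding Lm_def by (cases xs) auto
    show "fst (hd xs, tl xs) # snd (hd xs, tl xs) = xs" using e by simp
    show "(hd xs, tl xs) \<in> Sigma Q (\<lambda>q. Lm D (M - {#q#}) m)" using xs e by (auto simp: Lm_Cons Q_def)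
  qed
  finally show ?case unfolding G_def .
qed

lemma flip:
  assumes la: "lie_algebra br" and inv: "invariant_form br B"
  shows "B (ev br f xs y) a = (-1) ^ length xs * B y (ev br f (rev xs) a)"
proof (induction xs arbitrary: a)
  case Nil show ?case by (simp add: ev_Nil)
next
  case (Cons q xs)
  have "B (ev br f (q#xs) y) a = B (br (f (fst q)) (ev br f xs y)) a" by (simp add: ev_Cons)
  also have "\<dots> = B (- br (ev br f xs y) (f (fst q))) a" by (simp only: br_antisym[OF la, of "f (fst q)"])
  also have "\<dots> = - B (br (ev br f xs y) (f (fst q))) a" by (rule B_neg[OF inv])
  also have "\<dots> = - B (ev br f xs y) (br (f (fst q)) a)" by (simp only: B_facts(4)[OF inv])
  also have "\<dots> = - ((-1) ^ length xs * B y (ev br f (rev xs) (br (f (fst q)) a)))" by (simp only: Cons.IH)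
  also have "ev br f (rev xs) (br (f (fst q)) a) = ev br f (rev (q#xs)) a"
    by (simp add: ev_append ev_Cons ev_Nil)
  finally show ?case by simp
qed


lemma core:
  assumes la: "lie_algebra br" and inv: "invariant_form br B"
  shows "Cf B D f ((brS br (uz D f) ^^ m) (constS a)) M j =
         (-1) ^ m * B ((brS br (uz D f) ^^ m) (dzS (uz D f)) M j) a"
proof -
  define Q where "Q = {q\<in>set_mset M. fst q \<in> D}"
  define sl where "sl xs = sum_list (map snd xs)" for xs :: "('a hd \<times> int) list"
  define G where "G q xs = (if mset xs = M - {#q#} \<and> snd q + sl xs = j + 1
      then of_int (snd q) * B (f (fst q)) (ev br f xs a) else 0)" for q xs
  have L: "Cf B D f ((brS br (uz D f) ^^ m) (constS a)) M j = (\<Sum>q\<in>Q. \<Sum>xs\<in>Lm D M m. G q xs)"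
    unfolding Cf_def Q_def[symmetric]
  proof (rule sum.cong[OF refl])
    fix q assume q: "q \<in> Q"
    have "of_int (snd q) * B (f (fst q)) ((brS br (uz D f) ^^ m) (constS a) (M - {#q#}) (j - snd q + 1))
      = (\<Sum>xs\<in>Lm D (M - {#q#}) m. of_int (snd q) * B (f (fst q))
            (ev br f xs (constS a (M - {#q#} - mset xs) (j - snd q + 1 - sl xs))))"
      unfolding Tpow[OF la] B_sum_right[OF inv] sum_distrib_left sl_def ..
    also have "\<dots> = (\<Sum>xs\<in>Lm D (M - {#q#}) m. G q xs)"
    proof (rule sum.cong[OF refl])
      fix xs assume xs: "xs \<in> Lm D (M - {#q#}) m"
      then have sub: "mset xs \<subseteq># M - {#q#}" unfolding Lm_def by simp
      show "of_int (snd q) * B (f (fst q)) (ev br f xs (constS a (M - {#q#} - mset xs) (j - snd q + 1 - sl xs))) = G q xs"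
      proof (cases "mset xs = M - {#q#} \<and> snd q + sl xs = j + 1")
        case True
        then have "M - {#q#} - mset xs = {#} \<and> j - snd q + 1 - sl xs = 0" by simp
        then show ?thesis unfolding G_def constS_def using True by simp
      next
        case False
        then have nc: "\<not> (M - {#q#} - mset xs = {#} \<and> j - snd q + 1 - sl xs = 0)"
          using mc[OF sub] by auto
        have c0: "constS a (M - {#q#} - mset xs) (j - snd q + 1 - sl xs) = 0"
          unfolding constS_def by (rule if_not_P[OF nc])
        have g0: "G q xs = 0" unfolding G_def by (rule if_not_P[OF False])
        show ?thesis unfolding c0 g0 ev_zero[OF la] B_zero_right[OF inv] by simp
      qed
    qed
    also have "\<dots> = (\<Sum>xs\<in>Lm D M m. G q xs)"
    proof (rule sum.mono_neutral_left[OF fin_Lm])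
      show "Lm D (M - {#q#}) m \<subseteq> Lm D M m" unfolding Lm_def
        using subset_mset.order_trans[OF _ diff_subset_eq_self] by blast
      show "\<forall>xs\<in>Lm D M m - Lm D (M - {#q#}) m. G q xs = 0"
      proof
        fix xs assume "xs \<in> Lm D M m - Lm D (M - {#q#}) m"
        then have "xs \<in> Lm D M m" "xs \<notin> Lm D (M - {#q#}) m" by auto
        then have "mset xs \<noteq> M - {#q#}" unfolding Lm_def by auto
        then show "G q xs = 0" unfolding G_def by simp
      qed
    qed
    finally show "of_int (snd q) * B (f (fst q)) ((brS br (uz D f) ^^ m) (constS a) (M - {#q#}) (j - snd q + 1))
      = (\<Sum>xs\<in>Lm D M m. G q xs)" .
  qed
  have X: "(-1) ^ m * B (ev br f xs (dzS (uz D f) (M - mset xs) (j - sl xs))) a = (\<Sum>q\<in>Q. G q (rev xs))"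
    if xs: "xs \<in> Lm D M m" for xs
  proof -
    have sub: "mset xs \<subseteq># M" and len: "length xs = m" using xs unfolding Lm_def by auto
    define N where "N = M - mset xs"
    define i where "i = j - sl xs"
    have slr: "sl (rev xs) = sl xs" unfolding sl_def by (simp flip: rev_map)
    have dz: "dzS (uz D f) N i = of_int (i + 1) *s (\<Sum>q\<in>{q. N = {#q#} \<and> fst q \<in> D \<and> snd q = i + 1}. f (fst q))"
      unfolding dzS_def uz_def ..
    show ?thesis
    proof (cases "\<exists>q0. N = {#q0#} \<and> fst q0 \<in> D \<and> snd q0 = i + 1")
      case True
      then obtain q0 where q0: "N = {#q0#}" "fst q0 \<in> D" "snd q0 = i + 1" by blast
      have S: "{q. N = {#q#} \<and> fst q \<in> D \<and> snd q = i + 1} = {q0}" using q0 by auto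
      have mq0: "mset xs = M - {#q0#}" using ma[OF sub] q0(1) unfolding N_def by simp
      have q0M: "q0 \<in># M" using q0(1) unfolding N_def by (metis diff_subset_eq_self mset_subset_eqD union_single_eq_member add_cancel_right_left multi_member_last)
      have "(-1) ^ m * B (ev br f xs (dzS (uz D f) N i)) a
          = (-1) ^ m * (of_int (i+1) * B (ev br f xs (f (fst q0))) a)"
        unfolding dz S ev_scale[OF la] B_facts(3)[OF inv] by simp
      also have "\<dots> = of_int (snd q0) * B (f (fst q0)) (ev br f (rev xs) a)"
        unfolding flip[OF la inv] len q0(3) by (simp add: power_mult_distrib[symmetric] algebra_simps)
      also have "\<dots> = (\<Sum>q\<in>Q. G q (rev xs))"
      proof -
        have "(\<Sum>q\<in>Q. G q (rev xs)) = (\<Sum>q\<in>{q0}. G q (rev xs))"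
        proof (rule sum.mono_neutral_right)
          show "finite Q" unfolding Q_def by simp
          show "{q0} \<subseteq> Q" unfolding Q_def using q0M q0(2) by simp
          show "\<forall>q\<in>Q - {q0}. G q (rev xs) = 0"
          proof
            fix q assume "q \<in> Q - {q0}"
            then have qM: "q \<in># M" and ne: "q \<noteq> q0" unfolding Q_def by auto
            show "G q (rev xs) = 0"
            proof (rule ccontr)
              assume "G q (rev xs) \<noteq> 0"
              then have "mset xs = M - {#q#}" unfolding G_def by (auto split: if_splits)
              then have "N = {#q#}" unfolding N_def by (rule mb[OF qM])
              then show False using q0(1) ne by simp
            qed
          qed
        qed
        also have "\<dots> = G q0 (rev xs)" by simp
        also have "\<dots> = of_int (snd q0) * B (f (fst q0)) (ev br f (rev xs) a)"
          unfolding G_def slr using mq0 q0(3) unfolding i_def by simp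
        finally show ?thesis by simp
      qed
      finally show ?thesis unfolding N_def i_def .
    next
      case False
      then have S: "{q. N = {#q#} \<and> fst q \<in> D \<and> snd q = i + 1} = {}" by auto
      have "(\<Sum>q\<in>Q. G q (rev xs)) = 0"
      proof (rule sum.neutral, rule ballI)
        fix q assume q: "q \<in> Q"
        show "G q (rev xs) = 0"
        proof (rule ccontr)
          assume "G q (rev xs) \<noteq> 0"
          then have c: "mset xs = M - {#q#}" "snd q + sl xs = j + 1" unfolding G_def slr by (auto split: if_splits)
          have "N = {#q#}" unfolding N_def using c(1) q unfolding Q_def by (intro mb) auto
          then show False using False q c(2) unfolding Q_def i_def by auto
        qed
      qed
      moreover have "dzS (uz D f) N i = 0" unfolding dz S by simp
      ultimately show ?thesis unfolding N_def[symmetric] i_def[symmetric]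
        by (simp add: ev_zero[OF la] B_facts(2)[OF inv, of 0] B_zero_right[OF inv])
    qed
  qed
  have "(-1) ^ m * B ((brS br (uz D f) ^^ m) (dzS (uz D f)) M j) a
      = (\<Sum>xs\<in>Lm D M m. (-1) ^ m * B (ev br f xs (dzS (uz D f) (M - mset xs) (j - sl xs))) a)"
    unfolding Tpow[OF la] B_sum_left[OF inv] sum_distrib_left sl_def ..
  also have "\<dots> = (\<Sum>xs\<in>Lm D M m. \<Sum>q\<in>Q. G q (rev xs))" by (rule sum.cong[OF refl X])
  also have "\<dots> = (\<Sum>q\<in>Q. \<Sum>xs\<in>Lm D M m. G q (rev xs))" by (rule sum.swap)
  also have "\<dots> = (\<Sum>q\<in>Q. \<Sum>xs\<in>Lm D M m. G q xs)"
  proof (rule sum.cong[OF refl])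
    fix q
    show "(\<Sum>xs\<in>Lm D M m. G q (rev xs)) = (\<Sum>xs\<in>Lm D M m. G q xs)"
      by (rule sum.reindex_bij_witness[where i=rev and j=rev]) (auto simp: Lm_def)
  qed
  finally show ?thesis using L by simp
qed

theorem mainTheorem2:
  fixes br :: "complex ^ ('n::finite) \<Rightarrow> complex ^ 'n \<Rightarrow> complex ^ 'n"
    and B :: "complex ^ ('n::finite) \<Rightarrow> complex ^ 'n \<Rightarrow> complex"
    and h :: "(complex ^ ('n::finite)) set"
    and P S :: "(complex ^ ('n::finite) \<Rightarrow> complex) set"
    and f :: "(complex ^ ('n::finite) \<Rightarrow> complex) \<Rightarrow> complex ^ 'n"
    and a :: "complex ^ ('n::finite)"
    and k :: nat
  assumes "simple_lie br"
    and "cartan_subalgebra br h"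
    and "is_base br h P"
    and "S \<subseteq> P"
    and "invariant_form br B"
    and "normalized_form br h P B"
    and "inj_on f (Delta_u br h P S)"
    and "vec.independent (f ` Delta_u br h P S)"
    and "vec.span (f ` Delta_u br h P S) = ubar br h P S"
    and "k \<ge> 1"
  shows "(adUx br B (Delta_u br h P S) f ^^ k) (currentW a) =
         addW (realizeW ((brS br (uz (Delta_u br h P S) f) ^^ k) (constS a)))
              (centralW (\<lambda>M j. (-1) ^ (k - 1) *
                 formS B ((brS br (uz (Delta_u br h P S) f) ^^ (k - 1))
                            (dzS (uz (Delta_u br h P S) f))) a M j))"
proof -
  define D where "D = Delta_u br h P S"
  have la: "lie_algebra br" using assms(1)[unfolded simple_lie_def] by (rule conjunct1)
  have inv: "invariant_form br B" by (rule assms(5))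
  have c: "Cf B D f ((brS br (uz D f) ^^ (k - 1)) (constS a)) =
     (\<lambda>M j. (-1) ^ (k - 1) * formS B ((brS br (uz D f) ^^ (k - 1)) (dzS (uz D f))) a M j)"
    by (intro ext) (simp only: core[OF la inv] formS_def)
  show ?thesis unfolding D_def[symmetric] iter[OF la assms(10)] c ..
qed

end
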